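(* If $G$ is an appended $3$-star of order $n$, maximum degree $\Delta=3$ and diameter at most $6$, then $\gamma^{\rm ID}(G)=\frac23 n+\frac13$.
   Context: An identifying code of a graph $G$ is a set $C\subseteq V(G)$ such that every vertex $v$ has $N[v]\cap C\neq\emptyset$ and for all distinct $u,v$, $N[u]\cap C \ne N[v]\cap C$, where $N[v]$ is the closed neighborhood; $\gamma^{\rm ID}(G)$ is its minimum size. A 3-star is $K_{1,3}$. For a graph $G'$, a vertex $v$ of $G'$ and a star $S$, $G'\rhd_v S$ is the graph obtained from the disjoint union of $G'$ and $S$ by identifying $v$ with a leaf of $S$. An appended 3-star is a graph $G_p$ ($p\ge 0$) where $G_0$ is a 3-star and $G_i=G_{i-1}\rhd_{v_{i-1}}S_i$ for $i=1,\dots,p$, with each $S_i$ a 3-star and $v_{i-1}$ a vertex of $G_{i-1}$. *)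

theory Defs
  imports Complex_Main
begin

text \<open>Finite simple graphs given by a vertex set V and an edge set E of
two-element subsets of V.\<close>

definition adj :: "'a set set \<Rightarrow> 'a \<Rightarrow> 'a \<Rightarrow> bool" where
  "adj E u v \<longleftrightarrow> {u, v} \<in> E"

definition closed_nbhd :: "'a set \<Rightarrow> 'a set set \<Rightarrow> 'a \<Rightarrow> 'a set" where
  "closed_nbhd V E v = insert v {u \<in> V. adj E u v}"

definition degree :: "'a set \<Rightarrow> 'a set set \<Rightarrow> 'a \<Rightarrow> nat" where
  "degree V E v = card {u \<in> V. adj E u v}"

definition max_degree :: "'a set \<Rightarrow> 'a set set \<Rightarrow> nat" where
  "max_degree V E = Max (degree V E ` V)"

text \<open>A walk is a nonempty list of vertices, consecutive ones adjacent;
its length is the number of edges traversed.\<close>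

definition is_walk :: "'a set \<Rightarrow> 'a set set \<Rightarrow> 'a list \<Rightarrow> bool" where
  "is_walk V E xs \<longleftrightarrow> xs \<noteq> [] \<and> set xs \<subseteq> V \<and>
     (\<forall>i. Suc i < length xs \<longrightarrow> adj E (xs ! i) (xs ! Suc i))"

definition dist :: "'a set \<Rightarrow> 'a set set \<Rightarrow> 'a \<Rightarrow> 'a \<Rightarrow> nat" where
  "dist V E u v = (LEAST k. \<exists>xs. is_walk V E xs \<and> hd xs = u \<and> last xs = v \<and> length xs = Suc k)"

definition diameter :: "'a set \<Rightarrow> 'a set set \<Rightarrow> nat" where
  "diameter V E = Max {dist V E u v | u v. u \<in> V \<and> v \<in> V}"

definition is_identifying_code :: "'a set \<Rightarrow> 'a set set \<Rightarrow> 'a set \<Rightarrow> bool" where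
  "is_identifying_code V E C \<longleftrightarrow> C \<subseteq> V \<and>
     (\<forall>v\<in>V. closed_nbhd V E v \<inter> C \<noteq> {}) \<and>
     (\<forall>u\<in>V. \<forall>v\<in>V. u \<noteq> v \<longrightarrow> closed_nbhd V E u \<inter> C \<noteq> closed_nbhd V E v \<inter> C)"

definition gamma_ID :: "'a set \<Rightarrow> 'a set set \<Rightarrow> nat" where
  "gamma_ID V E = (LEAST k. \<exists>C. is_identifying_code V E C \<and> card C = k)"

text \<open>Appended 3-stars (up to relabelling): G_0 is a 3-star K_{1,3};
G_i arises from G_{i-1} by attaching a new 3-star whose leaf is identified
with a vertex v of G_{i-1}, i.e. adding a fresh centre c adjacent to v and
to two further fresh leaves x, y.\<close>

inductive appended_3star :: "'a set \<Rightarrow> 'a set set \<Rightarrow> bool" where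
  base: "distinct [c, a, b, d] \<Longrightarrow>
         appended_3star {c, a, b, d} {{c, a}, {c, b}, {c, d}}"
| step: "appended_3star V E \<Longrightarrow> v \<in> V \<Longrightarrow> distinct [c, x, y] \<Longrightarrow>
         c \<notin> V \<Longrightarrow> x \<notin> V \<Longrightarrow> y \<notin> V \<Longrightarrow>
         appended_3star (V \<union> {c, x, y}) (E \<union> {{c, v}, {c, x}, {c, y}})"

end

theory Submission
  imports Defs
begin

definition wf_edges :: "'a set \<Rightarrow> 'a set set \<Rightarrow> bool" where
  "wf_edges V E \<longleftrightarrow> (\<forall>e\<in>E. \<exists>a b. e = {a,b} \<and> a \<in> V \<and> b \<in> V \<and> a \<noteq> b)"

definition bridge_ok :: "'a set set \<Rightarrow> bool" where
  "bridge_ok E \<longleftrightarrow> (\<forall>a b. {a,b} \<in> E \<longrightarrow> (\<exists>S. a \<in> S \<and> b \<notin> S \<and>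
      (\<forall>x y. {x,y} \<in> E \<longrightarrow> x \<in> S \<longrightarrow> y \<notin> S \<longrightarrow> x = a \<and> y = b)))"

definition conn :: "'a set \<Rightarrow> 'a set set \<Rightarrow> bool" where
  "conn V E \<longleftrightarrow> (\<forall>u\<in>V. \<forall>w\<in>V. \<exists>xs. is_walk V E xs \<and> hd xs = u \<and> last xs = w)"

definition nbw :: "'a list \<Rightarrow> bool" where
  "nbw xs \<longleftrightarrow> (\<forall>i. i + 2 < length xs \<longrightarrow> xs ! i \<noteq> xs ! (i+2))"

lemma adj_sym: "adj E a b = adj E b a" by (simp add: adj_def insert_commute)

lemma wf_adj: "wf_edges V E \<Longrightarrow> adj E a b \<Longrightarrow> a \<in> V \<and> b \<in> V \<and> a \<noteq> b"
  unfolding wf_edges_def adj_def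
  by (drule bspec, assumption) (auto simp: doubleton_eq_iff)

lemma is_walk_nth: "is_walk V E xs \<longleftrightarrow> xs \<noteq> [] \<and> (\<forall>t<length xs. xs ! t \<in> V) \<and>
     (\<forall>i. Suc i < length xs \<longrightarrow> adj E (xs ! i) (xs ! Suc i))"
  unfolding is_walk_def by (auto simp: set_conv_nth)

lemma walk_adj: "is_walk V E xs \<Longrightarrow> Suc i < length xs \<Longrightarrow> adj E (xs ! i) (xs ! Suc i)"
  unfolding is_walk_def by auto

lemma walk_in: "is_walk V E xs \<Longrightarrow> t < length xs \<Longrightarrow> xs ! t \<in> V"
  unfolding is_walk_nth by auto

lemma walk_mono: "is_walk V E xs \<Longrightarrow> V \<subseteq> V' \<Longrightarrow> E \<subseteq> E' \<Longrightarrow> is_walk V' E' xs"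
  unfolding is_walk_def adj_def by blast

lemma walk_rev: "is_walk V E xs \<Longrightarrow> is_walk V E (rev xs)"
  unfolding is_walk_nth
proof (intro conjI allI impI)
  assume a: "xs \<noteq> [] \<and> (\<forall>t<length xs. xs ! t \<in> V) \<and> (\<forall>i. Suc i < length xs \<longrightarrow> adj E (xs ! i) (xs ! Suc i))"
  show "rev xs \<noteq> []" using a by simp
  fix t assume "t < length (rev xs)" then show "rev xs ! t \<in> V" using a by (simp add: rev_nth)
next
  fix i
  assume a: "xs \<noteq> [] \<and> (\<forall>t<length xs. xs ! t \<in> V) \<and> (\<forall>i. Suc i < length xs \<longrightarrow> adj E (xs ! i) (xs ! Suc i))"
    and i: "Suc i < length (rev xs)"
  have "adj E (xs ! (length xs - Suc (Suc i))) (xs ! Suc (length xs - Suc (Suc i)))"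
    using a i by auto
  moreover have "Suc (length xs - Suc (Suc i)) = length xs - Suc i" using i by simp
  ultimately show "adj E (rev xs ! i) (rev xs ! Suc i)" using i
    by (simp add: rev_nth adj_sym)
qed

lemma walk_append: assumes "is_walk V E xs" "is_walk V E ys" "last xs = hd ys"
  shows "is_walk V E (xs @ tl ys)"
proof -
  have xs: "xs \<noteq> []" and ys: "ys \<noteq> []" using assms unfolding is_walk_def by auto
  have l: "xs ! (length xs - 1) = ys ! 0" using assms(3) xs ys by (simp add: last_conv_nth hd_conv_nth)
  show ?thesis unfolding is_walk_nth
  proof (intro conjI allI impI)
    show "xs @ tl ys \<noteq> []" using xs by simp
    fix t assume t: "t < length (xs @ tl ys)"
    show "(xs @ tl ys) ! t \<in> V"
    proof (cases "t < length xs")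
      case True then show ?thesis using assms(1) by (simp add: nth_append walk_in)
    next
      case False then show ?thesis using assms(2) t ys
        by (auto simp: nth_append nth_tl intro!: walk_in)
    qed
  next
    fix i assume i: "Suc i < length (xs @ tl ys)"
    show "adj E ((xs @ tl ys) ! i) ((xs @ tl ys) ! Suc i)"
    proof (cases "Suc i < length xs")
      case True then show ?thesis using assms(1) by (simp add: nth_append walk_adj)
    next
      case False
      show ?thesis
      proof (cases "i < length xs")
        case True
        then have "i = length xs - 1" using False by simp
        then show ?thesis using assms(2) i ys xs l False walk_adj[OF assms(2), of 0]
          by (auto simp: nth_append nth_tl)
      next
        case False
        have "adj E (ys ! Suc (i - length xs)) (ys ! Suc (Suc (i - length xs)))"
          using i ys False by (intro walk_adj[OF assms(2)]) auto
        then show ?thesis using False i by (simp add: nth_append nth_tl Suc_diff_le)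
      qed
    qed
  qed
qed

lemma walk_append_ends: assumes "xs \<noteq> []" "ys \<noteq> []" "last xs = hd ys"
  shows "hd (xs @ tl ys) = hd xs" "last (xs @ tl ys) = last ys"
  using assms by (cases ys; auto simp: last_append)+


lemma crossing:
  assumes "p \<le> q" "xs ! p \<in> S" "xs ! q \<notin> S"
  shows "\<exists>k. p \<le> k \<and> k < q \<and> xs ! k \<in> S \<and> xs ! Suc k \<notin> S"
  using assms
proof (induction q)
  case 0 then show ?case by simp
next
  case (Suc q)
  show ?case
  proof (cases "p = Suc q")
    case True then show ?thesis using Suc by simp
  next
    case False
    then have pq: "p \<le> q" using Suc by simp
    show ?thesis
    proof (cases "xs ! q \<in> S")
      case True then show ?thesis using pq Suc by blast
    next
      case False
      then show ?thesis using Suc.IH[OF pq Suc(3) False] by (meson less_SucI)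
    qed
  qed
qed

lemma bridge_cross:
  assumes "bridge_ok E" "{a,b} \<in> E"
  obtains S where "a \<in> S" "b \<notin> S" "\<And>x y. {x,y} \<in> E \<Longrightarrow> x \<in> S \<Longrightarrow> y \<notin> S \<Longrightarrow> x = a \<and> y = b"
proof -
  from assms(1)[unfolded bridge_ok_def, rule_format, OF assms(2)] obtain S where
    S: "a \<in> S" "b \<notin> S" "\<forall>x y. {x,y} \<in> E \<longrightarrow> x \<in> S \<longrightarrow> y \<notin> S \<longrightarrow> x = a \<and> y = b"
    by (elim exE conjE) simp
  show ?thesis by (rule that[OF S(1) S(2)]) (use S(3) in simp)
qed

lemma nb_distinct:
  assumes wf: "wf_edges V E" and br: "bridge_ok E" and w: "is_walk V E xs" and nb: "nbw xs"
  shows "distinct xs"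
proof (rule ccontr)
  assume "\<not> distinct xs"
  then obtain i0 j0 where ij0: "i0 < j0" "j0 < length xs" "xs ! i0 = xs ! j0"
    by (metis distinct_conv_nth linorder_neqE_nat)
  define P where "P j \<longleftrightarrow> (\<exists>i<j. j < length xs \<and> xs ! i = xs ! j)" for j
  have Pj0: "P j0" using ij0 unfolding P_def by blast
  define j where "j = (LEAST j. P j)"
  have Pj: "P j" unfolding j_def by (rule LeastI[of P, OF Pj0])
  have minj: "\<And>a b. a < b \<Longrightarrow> b < j \<Longrightarrow> xs ! a \<noteq> xs ! b"
  proof
    fix a b assume ab: "a < b" "b < j" "xs ! a = xs ! b"
    have "b < length xs" using Pj ab unfolding P_def by auto
    then have "P b" using ab unfolding P_def by blast
    then have "j \<le> b" unfolding j_def by (rule Least_le)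
    then show False using ab by simp
  qed
  obtain i where i: "i < j" "j < length xs" "xs ! i = xs ! j" using Pj unfolding P_def by blast
  have "j \<noteq> Suc i"
  proof
    assume "j = Suc i"
    then have "adj E (xs ! i) (xs ! i)" using walk_adj[OF w, of i] i by simp
    then show False using wf_adj[OF wf] by blast
  qed
  moreover have "j \<noteq> i + 2" using nb i unfolding nbw_def by auto
  ultimately have ij3: "i + 3 \<le> j" using i by linarith
  have "adj E (xs ! i) (xs ! Suc i)" using walk_adj[OF w, of i] ij3 i by simp
  then have "{xs ! Suc i, xs ! i} \<in> E" unfolding adj_def by (simp add: insert_commute)
  then obtain S where S: "xs ! Suc i \<in> S" "xs ! i \<notin> S"
    "\<And>x y. {x,y} \<in> E \<Longrightarrow> x \<in> S \<Longrightarrow> y \<notin> S \<Longrightarrow> x = xs ! Suc i \<and> y = xs ! i"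
    using bridge_cross[OF br] by blast
  obtain k where k: "Suc i \<le> k" "k < j" "xs ! k \<in> S" "xs ! Suc k \<notin> S"
    using crossing[of "Suc i" j xs S] S i ij3 by auto
  have "{xs ! k, xs ! Suc k} \<in> E" using walk_adj[OF w, of k] k i unfolding adj_def by simp
  then have kk: "xs ! k = xs ! Suc i" "xs ! Suc k = xs ! i" using S(3) k by auto
  have "k = Suc i"
  proof (rule ccontr)
    assume "k \<noteq> Suc i"
    then show False using minj[of "Suc i" k] kk k by simp
  qed
  then have e2: "xs ! (i+2) = xs ! i" using kk by simp
  have l2: "i+2 < length xs" using i ij3 by simp
  show False using nb[unfolded nbw_def, rule_format, OF l2] e2 by simp
qed

lemma walk_len:
  assumes wf: "wf_edges V E" and br: "bridge_ok E" and w: "is_walk V E xs" and d: "distinct xs"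
    and w2: "is_walk V E ys" and h: "hd ys = hd xs" and l: "last ys = last xs"
  shows "length xs \<le> length ys"
proof -
  define n where "n = length xs"
  define m where "m = length ys"
  have n1: "n \<ge> 1" and m1: "m \<ge> 1" using w w2 unfolding is_walk_def n_def m_def by (auto simp: Suc_le_eq)
  define ex where "ex i = {xs ! i, xs ! Suc i}" for i
  define ey where "ey k = {ys ! k, ys ! Suc k}" for k
  have key: "ex i \<in> ey ` {..<m-1}" if i: "i < n - 1" for i
  proof -
    have "{xs ! i, xs ! Suc i} \<in> E" using walk_adj[OF w, of i] i unfolding adj_def n_def by simp
    then obtain S where S: "xs ! i \<in> S" "xs ! Suc i \<notin> S"
      "\<And>x y. {x,y} \<in> E \<Longrightarrow> x \<in> S \<Longrightarrow> y \<notin> S \<Longrightarrow> x = xs ! i \<and> y = xs ! Suc i"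
      using bridge_cross[OF br] by blast
    have dd: "\<And>a b. a < n \<Longrightarrow> b < n \<Longrightarrow> xs ! a = xs ! b \<Longrightarrow> a = b"
      using d unfolding n_def by (simp add: nth_eq_iff_index_eq)
    have in0: "xs ! 0 \<in> S"
    proof (rule ccontr)
      assume a: "xs ! 0 \<notin> S"
      obtain k where k: "0 \<le> k" "k < i" "xs ! k \<in> - S" "xs ! Suc k \<notin> - S"
        using crossing[of 0 i xs "- S"] a S(1) by (cases "i = 0") auto
      have "{xs ! Suc k, xs ! k} \<in> E" using walk_adj[OF w, of k] k i unfolding adj_def n_def
        by (simp add: insert_commute)
      then have "xs ! Suc k = xs ! i" "xs ! k = xs ! Suc i" using S(3) k by auto
      then show False using dd[of "Suc k" i] dd[of k "Suc i"] k i by (auto simp: less_diff_conv)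
    qed
    have out: "xs ! (n - 1) \<notin> S"
    proof
      assume a: "xs ! (n - 1) \<in> S"
      obtain k where k: "Suc i \<le> k" "k < n - 1" "xs ! k \<in> - S" "xs ! Suc k \<notin> - S"
        using crossing[of "Suc i" "n - 1" xs "- S"] a S(2) i by auto
      have "{xs ! Suc k, xs ! k} \<in> E" using walk_adj[OF w, of k] k i unfolding adj_def n_def
        by (simp add: insert_commute)
      then have "xs ! Suc k = xs ! i" using S(3) k by auto
      then show False using dd[of "Suc k" i] k i by (auto simp: less_diff_conv)
    qed
    have "ys ! 0 \<in> S" using in0 h w w2 unfolding is_walk_def by (simp add: hd_conv_nth)
    moreover have "ys ! (m - 1) \<notin> S" using out l w w2 unfolding is_walk_def m_def n_def
      by (simp add: last_conv_nth)
    ultimately obtain k where k: "k < m - 1" "ys ! k \<in> S" "ys ! Suc k \<notin> S"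
      using crossing[of 0 "m - 1" ys S] by auto
    have "{ys ! k, ys ! Suc k} \<in> E" using walk_adj[OF w2, of k] k unfolding adj_def m_def by simp
    then have "ys ! k = xs ! i" "ys ! Suc k = xs ! Suc i" using S(3) k by auto
    then show ?thesis using k unfolding ex_def ey_def by (intro image_eqI[of _ _ k]) auto
  qed
  have inj: "inj_on ex {..<n-1}"
  proof
    fix a b assume a: "a \<in> {..<n-1}" and b: "b \<in> {..<n-1}" and e: "ex a = ex b"
    have dd: "\<And>a b. a < n \<Longrightarrow> b < n \<Longrightarrow> xs ! a = xs ! b \<Longrightarrow> a = b"
      using d unfolding n_def by (simp add: nth_eq_iff_index_eq)
    from e have "(xs ! a = xs ! b \<and> xs ! Suc a = xs ! Suc b) \<or> (xs ! a = xs ! Suc b \<and> xs ! Suc a = xs ! b)"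
      unfolding ex_def by (auto simp: doubleton_eq_iff)
    note disj = this
    have lt: "a < n" "b < n" "Suc a < n" "Suc b < n" using a b by auto
    show "a = b"
    proof (cases "xs ! a = xs ! b \<and> xs ! Suc a = xs ! Suc b")
      case True then show ?thesis using dd[of a b, OF lt(1) lt(2)] by simp
    next
      case False
      then have h: "xs ! a = xs ! Suc b" "xs ! Suc a = xs ! b" using disj by auto
      have "a = Suc b" by (rule dd[of a "Suc b", OF lt(1) lt(4) h(1)])
      moreover have "Suc a = b" by (rule dd[of "Suc a" b, OF lt(3) lt(2) h(2)])
      ultimately show ?thesis by simp
    qed
  qed
  have "n - 1 = card (ex ` {..<n-1})" using card_image[OF inj] by simp
  also have "\<dots> \<le> card (ey ` {..<m-1})" using key by (intro card_mono) auto
  also have "\<dots> \<le> m - 1" using card_image_le[of "{..<m-1}" ey] by simp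
  finally show ?thesis using n1 m1 unfolding n_def m_def by simp
qed

lemma dist_walk:
  assumes "\<exists>xs. is_walk V E xs \<and> hd xs = u \<and> last xs = w"
  shows "\<exists>xs. is_walk V E xs \<and> hd xs = u \<and> last xs = w \<and> length xs = Suc (dist V E u w)"
proof -
  from assms obtain xs where xs: "is_walk V E xs" "hd xs = u" "last xs = w" by blast
  then have "xs \<noteq> []" unfolding is_walk_def by simp
  then have "\<exists>k. \<exists>xs. is_walk V E xs \<and> hd xs = u \<and> last xs = w \<and> length xs = Suc k"
    using xs by (intro exI[of _ "length xs - 1"]) auto
  then show ?thesis unfolding dist_def by (rule LeastI_ex)
qed

lemma dist_le:
  assumes "is_walk V E xs" "hd xs = u" "last xs = w"
  shows "dist V E u w \<le> length xs - 1"
proof -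
  have "xs \<noteq> []" using assms unfolding is_walk_def by simp
  then show ?thesis unfolding dist_def using assms
    by (intro Least_le) (rule exI[of _ xs], auto)
qed

lemma remove_walk:
  assumes w: "is_walk V E xs" and i: "i + 2 < length xs" and e: "xs ! i = xs ! (i+2)"
  defines "ys \<equiv> take (Suc i) xs @ drop (i+3) xs"
  shows "is_walk V E ys" "hd ys = hd xs" "last ys = last xs" "length ys = length xs - 2"
proof -
  have len: "length ys = length xs - 2" unfolding ys_def using i by simp
  have nth1: "ys ! t = xs ! t" if "t \<le> i" for t
    unfolding ys_def using that i by (simp add: nth_append)
  have nth2: "ys ! t = xs ! (t + 2)" if "t > i" "t < length ys" for t
    unfolding ys_def using that i len by (simp add: nth_append)
  show "is_walk V E ys" unfolding is_walk_nth
  proof (intro conjI allI impI)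
    show "ys \<noteq> []" unfolding ys_def using i by (cases xs) auto
    fix t assume t: "t < length ys"
    show "ys ! t \<in> V"
    proof (cases "t \<le> i")
      case True then show ?thesis using nth1 walk_in[OF w] i by simp
    next
      case False then show ?thesis using nth2 t len walk_in[OF w] by simp
    qed
  next
    fix t assume t: "Suc t < length ys"
    show "adj E (ys ! t) (ys ! Suc t)"
    proof (cases "Suc t \<le> i")
      case True then show ?thesis using nth1 walk_adj[OF w, of t] i by simp
    next
      case False
      show ?thesis
      proof (cases "t = i")
        case True
        then show ?thesis using nth1[of i] nth2[of "Suc i"] t e walk_adj[OF w, of "i+2"] len
          by simp
      next
        case False
        then show ?thesis using nth2[of t] nth2[of "Suc t"] t \<open>\<not> Suc t \<le> i\<close> walk_adj[OF w, of "t+2"] len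
          by simp
      qed
    qed
  qed
  show "hd ys = hd xs" unfolding ys_def using i by (cases xs) auto
  show "last ys = last xs"
  proof (cases "i + 3 = length xs")
    case True
    then have "ys = take (Suc i) xs" unfolding ys_def by simp
    then have "last ys = xs ! i" using i by (simp add: take_Suc_conv_app_nth)
    also have "\<dots> = xs ! (length xs - 1)"
    proof -
      have "length xs - 1 = i + 2" using True by simp
      then show ?thesis using e by simp
    qed
    also have "\<dots> = last xs"
    proof -
      have "xs \<noteq> []" using i by auto
      then show ?thesis by (simp add: last_conv_nth)
    qed
    finally show ?thesis .
  next
    case False
    then have "drop (i+3) xs \<noteq> []" using i by simp
    then show ?thesis unfolding ys_def by (simp add: last_append)
  qed
  show "length ys = length xs - 2" by (rule len)
qed

lemma short_walk:
  assumes "\<exists>xs. is_walk V E xs \<and> hd xs = u \<and> last xs = w"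
  shows "\<exists>xs. is_walk V E xs \<and> hd xs = u \<and> last xs = w \<and> length xs = Suc (dist V E u w) \<and> nbw xs"
proof -
  obtain xs where xs: "is_walk V E xs" "hd xs = u" "last xs = w" "length xs = Suc (dist V E u w)"
    using dist_walk[OF assms] by blast
  have "nbw xs" unfolding nbw_def
  proof (intro allI impI notI)
    fix i assume i: "i + 2 < length xs" and e: "xs ! i = xs ! (i+2)"
    note r = remove_walk[OF xs(1) i e]
    have "dist V E u w \<le> length (take (Suc i) xs @ drop (i+3) xs) - 1"
      using dist_le[OF r(1) r(2) r(3)] xs(2,3) by simp
    with r(4) xs(4) i show False by arith
  qed
  then show ?thesis using xs by blast
qed


lemma wf_mem: "wf_edges V E \<Longrightarrow> {p,q} \<in> E \<Longrightarrow> p \<in> V \<and> q \<in> V \<and> p \<noteq> q"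
  using wf_adj[of V E p q] unfolding adj_def by simp

lemma is_walk_single: "is_walk V E [a] \<longleftrightarrow> a \<in> V"
  unfolding is_walk_def by simp

lemma is_walk_Cons2: "is_walk V E (a # b # zs) \<longleftrightarrow> a \<in> V \<and> adj E a b \<and> is_walk V E (b # zs)"
proof
  assume w: "is_walk V E (a # b # zs)"
  have "adj E a b" using walk_adj[OF w, of 0] by simp
  moreover have "is_walk V E (b # zs)" unfolding is_walk_def
  proof (intro conjI allI impI)
    show "set (b # zs) \<subseteq> V" using w unfolding is_walk_def by simp
    fix i assume "Suc i < length (b # zs)"
    then show "adj E ((b # zs) ! i) ((b # zs) ! Suc i)" using walk_adj[OF w, of "Suc i"] by simp
  qed simp
  ultimately show "a \<in> V \<and> adj E a b \<and> is_walk V E (b # zs)" using w unfolding is_walk_def by simp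
next
  assume h: "a \<in> V \<and> adj E a b \<and> is_walk V E (b # zs)"
  show "is_walk V E (a # b # zs)" unfolding is_walk_def
  proof (intro conjI allI impI)
    show "set (a # b # zs) \<subseteq> V" using h unfolding is_walk_def by simp
    fix i assume i: "Suc i < length (a # b # zs)"
    show "adj E ((a # b # zs) ! i) ((a # b # zs) ! Suc i)"
    proof (cases i)
      case 0 then show ?thesis using h by simp
    next
      case (Suc j) then show ?thesis using h i walk_adj[of V E "b # zs" j] by simp
    qed
  qed simp
qed

lemma conn_from_root:
  assumes "r \<in> V" "\<forall>z\<in>V. \<exists>xs. is_walk V E xs \<and> hd xs = z \<and> last xs = r"
  shows "conn V E"
  unfolding conn_def
proof (intro ballI)
  fix u w assume u: "u \<in> V" and w: "w \<in> V"
  obtain xs where xs: "is_walk V E xs" "hd xs = u" "last xs = r" using assms u by blast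
  obtain ys where ys: "is_walk V E ys" "hd ys = w" "last ys = r" using assms w by blast
  have ne: "xs \<noteq> []" "rev ys \<noteq> []" using xs ys unfolding is_walk_def by auto
  have l: "last xs = hd (rev ys)" using xs ys ne by (simp add: hd_rev)
  show "\<exists>zs. is_walk V E zs \<and> hd zs = u \<and> last zs = w"
    using walk_append[OF xs(1) walk_rev[OF ys(1)] l] walk_append_ends[OF ne l] xs ys ne
    by (intro exI[of _ "xs @ tl (rev ys)"]) (simp add: last_rev)
qed

definition Inv :: "'a set \<Rightarrow> 'a set set \<Rightarrow> 'a set \<Rightarrow> bool" where
  "Inv V E K \<longleftrightarrow> finite V \<and> wf_edges V E \<and> K \<subseteq> V \<and> K \<noteq> {} \<and> card V = 3 * card K + 1 \<and>
     (\<forall>a b. {a,b} \<in> E \<longrightarrow> (a \<in> K \<longleftrightarrow> b \<notin> K)) \<and> (\<forall>c\<in>K. degree V E c = 3) \<and>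
     bridge_ok E \<and> conn V E"

lemma inv_base:
  assumes d: "distinct [c, a, b, d]"
  shows "Inv {c, a, b, d} {{c, a}, {c, b}, {c, d}} {c}"
proof -
  let ?V = "{c, a, b, d}" and ?E = "{{c, a}, {c, b}, {c, d}} :: 'a set set"
  have wf: "wf_edges ?V ?E" unfolding wf_edges_def using d by auto
  have nbc: "{u \<in> ?V. adj ?E u c} = {a, b, d}" using d unfolding adj_def by (auto simp: doubleton_eq_iff)
  have deg: "degree ?V ?E c = 3" unfolding degree_def nbc using d by simp
  have bip: "\<forall>p q. {p,q} \<in> ?E \<longrightarrow> (p \<in> {c} \<longleftrightarrow> q \<notin> {c})" using d by (auto simp: doubleton_eq_iff)
  have br: "bridge_ok ?E" unfolding bridge_ok_def
  proof (intro allI impI)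
    fix p q assume pq: "{p,q} \<in> ?E"
    show "\<exists>S. p \<in> S \<and> q \<notin> S \<and> (\<forall>x y. {x,y} \<in> ?E \<longrightarrow> x \<in> S \<longrightarrow> y \<notin> S \<longrightarrow> x = p \<and> y = q)"
    proof (cases "p = c")
      case True
      then show ?thesis using pq d
        by (intro exI[of _ "?V - {q}"]) (auto simp: doubleton_eq_iff)
    next
      case False
      then show ?thesis using pq d
        by (intro exI[of _ "{p}"]) (auto simp: doubleton_eq_iff)
    qed
  qed
  have cn: "conn ?V ?E"
  proof (rule conn_from_root[of c])
    show "c \<in> ?V" by simp
    show "\<forall>z\<in>?V. \<exists>xs. is_walk ?V ?E xs \<and> hd xs = z \<and> last xs = c"
    proof
      fix z assume z: "z \<in> ?V"
      show "\<exists>xs. is_walk ?V ?E xs \<and> hd xs = z \<and> last xs = c"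
      proof (cases "z = c")
        case True then show ?thesis by (intro exI[of _ "[c]"]) (simp add: is_walk_single)
      next
        case False then show ?thesis using z
          by (intro exI[of _ "[z, c]"]) (auto simp: is_walk_Cons2 is_walk_single adj_def insert_commute)
      qed
    qed
  qed
  show ?thesis unfolding Inv_def using wf deg bip br cn d by auto
qed


lemma step_facts:
  assumes fin: "finite V" and wf: "wf_edges V E" and v: "v \<in> V" and dd: "distinct [c, x, y]"
    and nc: "c \<notin> V" "x \<notin> V" "y \<notin> V"
  defines "V' \<equiv> V \<union> {c, x, y}" and "E' \<equiv> E \<union> {{c, v}, {c, x}, {c, y}}"
  shows "\<And>w. w \<in> V \<Longrightarrow> degree V' E' w = degree V E w + (if w = v then 1 else 0)"
    and "degree V' E' c = 3"
proof -
  fix w assume w: "w \<in> V"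
  have eq: "{u \<in> V'. adj E' u w} = {u \<in> V. adj E u w} \<union> (if w = v then {c} else {})"
    using w nc v wf_mem[OF wf] unfolding V'_def E'_def adj_def
    by (auto simp: doubleton_eq_iff)
  have "finite {u \<in> V. adj E u w}" using fin by simp
  moreover have "c \<notin> {u \<in> V. adj E u w}" using nc by simp
  ultimately show "degree V' E' w = degree V E w + (if w = v then 1 else 0)"
    unfolding degree_def eq by (cases "w = v") (simp_all add: nc)
next
  have eq: "{u \<in> V'. adj E' u c} = {v, x, y}"
    using nc v dd wf_mem[OF wf] unfolding V'_def E'_def adj_def
    by (auto simp: doubleton_eq_iff)
  have "v \<noteq> x" "v \<noteq> y" using v nc by auto
  then show "degree V' E' c = 3" unfolding degree_def eq using dd by simp
qed

lemma step_bridge: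
  assumes wf: "wf_edges V E" and br: "bridge_ok E" and v: "v \<in> V" and dd: "distinct [c, x, y]"
    and nc: "c \<notin> V" "x \<notin> V" "y \<notin> V"
  shows "bridge_ok (E \<union> {{c, v}, {c, x}, {c, y}})"
  unfolding bridge_ok_def
proof (intro allI impI)
  let ?E = "E \<union> {{c, v}, {c, x}, {c, y}}"
  let ?V = "V \<union> {c, x, y}"
  have mem: "\<And>p q. {p,q} \<in> E \<Longrightarrow> p \<in> V \<and> q \<in> V" using wf_mem[OF wf] by blast
  fix a b assume ab: "{a,b} \<in> ?E"
  show "\<exists>S. a \<in> S \<and> b \<notin> S \<and> (\<forall>p q. {p,q} \<in> ?E \<longrightarrow> p \<in> S \<longrightarrow> q \<notin> S \<longrightarrow> p = a \<and> q = b)"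
  proof (cases "{a,b} \<in> E")
    case True
    obtain S where S: "a \<in> S" "b \<notin> S" "\<And>p q. {p,q} \<in> E \<Longrightarrow> p \<in> S \<Longrightarrow> q \<notin> S \<Longrightarrow> p = a \<and> q = b"
      using bridge_cross[OF br True] by blast
    define S' where "S' = (if v \<in> S then (S \<inter> V) \<union> {c, x, y} else S \<inter> V)"
    have abV: "a \<in> V" "b \<in> V" using mem[OF True] by auto
    have inS': "\<And>p. p \<in> V \<Longrightarrow> p \<in> S' \<longleftrightarrow> p \<in> S" unfolding S'_def using nc by auto
    have new: "\<And>p. p \<in> {c, x, y} \<Longrightarrow> p \<in> S' \<longleftrightarrow> v \<in> S" unfolding S'_def using nc by auto
    show ?thesis
    proof (intro exI[of _ S'] conjI)
      show "a \<in> S'" using inS' abV S by simp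
      show "b \<notin> S'" using inS' abV S by simp
      show "\<forall>p q. {p,q} \<in> ?E \<longrightarrow> p \<in> S' \<longrightarrow> q \<notin> S' \<longrightarrow> p = a \<and> q = b"
      proof (intro allI impI)
      fix p q assume pq: "{p,q} \<in> ?E" "p \<in> S'" "q \<notin> S'"
      show "p = a \<and> q = b"
      proof (cases "{p,q} \<in> E")
        case True
        then show ?thesis using mem[OF True] inS' S(3)[OF True] pq by auto
      next
        case False
        then have "{p,q} = {c,v} \<or> {p,q} = {c,x} \<or> {p,q} = {c,y}" using pq by auto
        then show ?thesis using pq new inS' v by (auto simp: doubleton_eq_iff)
      qed
      qed
    qed
  next
    case False
    then have cases: "{a,b} = {c,v} \<or> {a,b} = {c,x} \<or> {a,b} = {c,y}" using ab by auto
    have vv: "v \<noteq> c" "v \<noteq> x" "v \<noteq> y" using v nc by auto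
    have noE: "\<And>p q. {p,q} \<in> E \<Longrightarrow> p \<noteq> c \<and> p \<noteq> x \<and> p \<noteq> y \<and> q \<noteq> c \<and> q \<noteq> x \<and> q \<noteq> y"
      using mem nc by blast
    have memE: "\<And>p q. {p,q} \<in> ?E \<Longrightarrow> p \<in> ?V \<and> q \<in> ?V" using mem v by (auto simp: doubleton_eq_iff)
    consider "a = c" "b = v" | "a = v" "b = c" | "a = c" "b = x" | "a = x" "b = c" | "a = c" "b = y" | "a = y" "b = c"
      using cases by (auto simp: doubleton_eq_iff)
    then show ?thesis
    proof cases
      case 1
      show ?thesis using 1 vv dd noE
        by (intro exI[of _ "{c, x, y}"]) (auto simp: doubleton_eq_iff)
    next
      case 2
      show ?thesis using 2 vv dd noE v mem nc
        by (intro exI[of _ V]) (auto simp: doubleton_eq_iff)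
    next
      case 3
      show ?thesis using 3 vv dd noE memE
        by (intro exI[of _ "?V - {x}"]) (auto simp: doubleton_eq_iff)
    next
      case 4
      show ?thesis using 4 vv dd noE
        by (intro exI[of _ "{x}"]) (auto simp: doubleton_eq_iff)
    next
      case 5
      show ?thesis using 5 vv dd noE memE
        by (intro exI[of _ "?V - {y}"]) (auto simp: doubleton_eq_iff)
    next
      case 6
      show ?thesis using 6 vv dd noE
        by (intro exI[of _ "{y}"]) (auto simp: doubleton_eq_iff)
    qed
  qed
qed



lemma basic_induct: "appended_3star V E \<Longrightarrow> finite V \<and> wf_edges V E"
proof (induction rule: appended_3star.induct)
  case (base c a b d)
  then show ?case unfolding wf_edges_def by auto
next
  case (step V E v c x y)
  have "wf_edges (V \<union> {c, x, y}) (E \<union> {{c, v}, {c, x}, {c, y}})" unfolding wf_edges_def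
  proof
    fix e assume e: "e \<in> E \<union> {{c, v}, {c, x}, {c, y}}"
    show "\<exists>a b. e = {a, b} \<and> a \<in> V \<union> {c, x, y} \<and> b \<in> V \<union> {c, x, y} \<and> a \<noteq> b"
    proof (cases "e \<in> E")
      case True
      then obtain a b where "e = {a, b}" "a \<in> V" "b \<in> V" "a \<noteq> b"
        using step.IH unfolding wf_edges_def by blast
      then show ?thesis by blast
    next
      case False
      then show ?thesis using e step by auto
    qed
  qed
  then show ?case using step by simp
qed

lemma inv_induct:
  "appended_3star V E \<Longrightarrow> (\<forall>w\<in>V. degree V E w \<le> 3) \<Longrightarrow> \<exists>K. Inv V E K"
proof (induction rule: appended_3star.induct)
  case (base c a b d)
  have "Inv {c, a, b, d} {{c, a}, {c, b}, {c, d}} {c}" by (rule inv_base[OF base.hyps])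
  then show ?case by (rule exI)
next
  case (step V E v c x y)
  let ?V = "V \<union> {c, x, y}" and ?E = "E \<union> {{c, v}, {c, x}, {c, y}}"
  have fw: "finite V" "wf_edges V E" using basic_induct[OF step(1)] by auto
  note sf = step_facts[OF fw step(2) step(3) step(4) step(5) step(6)]
  have old: "\<forall>w\<in>V. degree V E w \<le> 3"
  proof
    fix w assume w: "w \<in> V"
    have "degree ?V ?E w \<le> 3" using step.prems w by blast
    then show "degree V E w \<le> 3" using sf(1)[OF w] by simp
  qed
  obtain K where K: "Inv V E K" using step.IH[OF old] by blast
  have vdeg: "degree V E v \<le> 2"
  proof -
    have "degree ?V ?E v \<le> 3" using step.prems step(2) by blast
    then show ?thesis using sf(1)[OF step(2)] by simp
  qed
  have vK: "v \<notin> K" using K vdeg unfolding Inv_def by auto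
  have Kp: "finite V" "wf_edges V E" "K \<subseteq> V" "K \<noteq> {}" "card V = 3 * card K + 1"
    "\<forall>a b. {a,b} \<in> E \<longrightarrow> (a \<in> K \<longleftrightarrow> b \<notin> K)" "\<forall>k\<in>K. degree V E k = 3"
    "bridge_ok E" "conn V E" using K unfolding Inv_def by auto
  have wf': "wf_edges ?V ?E" using basic_induct[OF appended_3star.step[OF step(1-6)]] by simp
  have cV: "card ?V = card V + 3"
  proof -
    have "card ?V = card V + card {c, x, y}" using step(3-6) Kp(1) by (intro card_Un_disjoint) auto
    moreover have "card {c, x, y} = 3" using step(3) by simp
    ultimately show ?thesis by simp
  qed
  have cK: "card (insert c K) = card K + 1"
  proof -
    have "finite K" using finite_subset[OF Kp(3) Kp(1)] .
    moreover have "c \<notin> K" using Kp(3) step(4) by blast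
    ultimately show ?thesis by simp
  qed
  have bip: "\<forall>a b. {a,b} \<in> ?E \<longrightarrow> (a \<in> insert c K \<longleftrightarrow> b \<notin> insert c K)"
  proof (intro allI impI)
    fix a b assume ab: "{a,b} \<in> ?E"
    show "a \<in> insert c K \<longleftrightarrow> b \<notin> insert c K"
    proof (cases "{a,b} \<in> E")
      case True
      then have "a \<in> V" "b \<in> V" using wf_mem[OF Kp(2)] by auto
      then show ?thesis using Kp(6) True step(4) by auto
    next
      case False
      then have "{a,b} = {c,v} \<or> {a,b} = {c,x} \<or> {a,b} = {c,y}" using ab by auto
      then show ?thesis using vK step(2-6) Kp(3) by (auto simp: doubleton_eq_iff)
    qed
  qed
  have degs: "\<forall>k\<in>insert c K. degree ?V ?E k = 3"
  proof
    fix k assume k: "k \<in> insert c K"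
    show "degree ?V ?E k = 3"
    proof (cases "k = c")
      case True then show ?thesis using sf(2) by simp
    next
      case False
      then have "k \<in> K" "k \<noteq> v" using k vK by auto
      then show ?thesis using sf(1)[of k] Kp(3,7) by auto
    qed
  qed
  have br: "bridge_ok ?E" by (rule step_bridge[OF Kp(2) Kp(8) step(2-6)])
  have cn: "conn ?V ?E"
  proof (rule conn_from_root[of v])
    show "v \<in> ?V" using step(2) by simp
    show "\<forall>z\<in>?V. \<exists>xs. is_walk ?V ?E xs \<and> hd xs = z \<and> last xs = v"
    proof
      fix z assume z: "z \<in> ?V"
      have avc: "adj ?E c v" "adj ?E x c" "adj ?E y c" unfolding adj_def by (auto simp: insert_commute)
      show "\<exists>xs. is_walk ?V ?E xs \<and> hd xs = z \<and> last xs = v"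
      proof (cases "z \<in> V")
        case True
        then obtain xs where "is_walk V E xs" "hd xs = z" "last xs = v"
          using Kp(9) step(2) unfolding conn_def by blast
        then show ?thesis by (intro exI[of _ xs]) (auto intro: walk_mono)
      next
        case False
        then have "z = c \<or> z = x \<or> z = y" using z by auto
        then show ?thesis
        proof (elim disjE)
          assume "z = c" then show ?thesis using avc step(2)
            by (intro exI[of _ "[c, v]"]) (simp add: is_walk_Cons2 is_walk_single)
        next
          assume "z = x" then show ?thesis using avc step(2)
            by (intro exI[of _ "[x, c, v]"]) (simp add: is_walk_Cons2 is_walk_single)
        next
          assume "z = y" then show ?thesis using avc step(2)
            by (intro exI[of _ "[y, c, v]"]) (simp add: is_walk_Cons2 is_walk_single)
        qed
      qed
    qed
  qed
  have "Inv ?V ?E (insert c K)" unfolding Inv_def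
    using Kp(1,3,5) wf' cV cK bip degs br cn step(2) by auto
  then show ?case by blast
qed


lemma nbw_Cons3: "nbw (a # b # c # zs) \<longleftrightarrow> a \<noteq> c \<and> nbw (b # c # zs)"
  unfolding nbw_def
proof
  assume h: "\<forall>i. i + 2 < length (a # b # c # zs) \<longrightarrow> (a # b # c # zs) ! i \<noteq> (a # b # c # zs) ! (i + 2)"
  show "a \<noteq> c \<and> (\<forall>i. i + 2 < length (b # c # zs) \<longrightarrow> (b # c # zs) ! i \<noteq> (b # c # zs) ! (i + 2))"
  proof (intro conjI allI impI)
    show "a \<noteq> c" using h[rule_format, of 0] by simp
    fix i assume "i + 2 < length (b # c # zs)"
    then show "(b # c # zs) ! i \<noteq> (b # c # zs) ! (i + 2)" using h[rule_format, of "Suc i"] by simp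
  qed
next
  assume h: "a \<noteq> c \<and> (\<forall>i. i + 2 < length (b # c # zs) \<longrightarrow> (b # c # zs) ! i \<noteq> (b # c # zs) ! (i + 2))"
  show "\<forall>i. i + 2 < length (a # b # c # zs) \<longrightarrow> (a # b # c # zs) ! i \<noteq> (a # b # c # zs) ! (i + 2)"
  proof (intro allI impI)
    fix i assume i: "i + 2 < length (a # b # c # zs)"
    show "(a # b # c # zs) ! i \<noteq> (a # b # c # zs) ! (i + 2)"
    proof (cases i)
      case 0 then show ?thesis using h by simp
    next
      case (Suc j) then show ?thesis using h i by simp
    qed
  qed
qed

lemma nbw_short: "nbw [a, b]" "nbw [a]" unfolding nbw_def by auto

locale fin_graph =
  fixes V :: "'a set" and E :: "'a set set" and K :: "'a set"
  assumes inv: "Inv V E K" and deg3: "\<forall>w\<in>V. degree V E w \<le> 3"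
    and diam: "\<forall>u\<in>V. \<forall>w\<in>V. dist V E u w \<le> 6"
begin

lemma finV: "finite V" and wf: "wf_edges V E" and KV: "K \<subseteq> V" and Kne: "K \<noteq> {}"
  and cardV: "card V = 3 * card K + 1"
  and bip0: "\<forall>a b. {a,b} \<in> E \<longrightarrow> (a \<in> K \<longleftrightarrow> b \<notin> K)" and degK: "\<forall>c\<in>K. degree V E c = 3"
  and br: "bridge_ok E" and cn: "conn V E"
  using inv unfolding Inv_def by auto

lemma adjV: "adj E a b \<Longrightarrow> a \<in> V \<and> b \<in> V \<and> a \<noteq> b" using wf_adj[OF wf] .

lemma bip: "adj E a b \<Longrightarrow> (a \<in> K \<longleftrightarrow> b \<notin> K)" using bip0 unfolding adj_def by blast

lemma conn_walk: "u \<in> V \<Longrightarrow> w \<in> V \<Longrightarrow> \<exists>xs. is_walk V E xs \<and> hd xs = u \<and> last xs = w"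
  using cn unfolding conn_def by blast

lemma no8:
  assumes "adj E w0 w1" "adj E w1 w2" "adj E w2 w3" "adj E w3 w4" "adj E w4 w5" "adj E w5 w6" "adj E w6 w7"
    and "w0 \<noteq> w2" "w1 \<noteq> w3" "w2 \<noteq> w4" "w3 \<noteq> w5" "w4 \<noteq> w6" "w5 \<noteq> w7"
  shows False
proof -
  let ?xs = "[w0, w1, w2, w3, w4, w5, w6, w7]"
  have w: "is_walk V E ?xs" using assms(1-7) adjV[of w6 w7]
    by (simp add: is_walk_Cons2 is_walk_single adjV)
  have "nbw ?xs" using assms(8-13) by (simp add: nbw_Cons3 nbw_short)
  then have d: "distinct ?xs" by (rule nb_distinct[OF wf br w])
  have "w0 \<in> V" "w7 \<in> V" using adjV assms by blast+
  then obtain ys where ys: "is_walk V E ys" "hd ys = w0" "last ys = w7" "length ys = Suc (dist V E w0 w7)"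
    using dist_walk[OF conn_walk] by blast
  have "length ?xs \<le> length ys" by (rule walk_len[OF wf br w d ys(1)]) (simp_all add: ys)
  moreover have "dist V E w0 w7 \<le> 6" using diam \<open>w0 \<in> V\<close> \<open>w7 \<in> V\<close> by blast
  ultimately show False using ys(4) by simp
qed

lemma no4:
  assumes "adj E a p" "adj E p b" "adj E b q" "adj E q a" "a \<noteq> b" "p \<noteq> q"
  shows False
proof -
  let ?xs = "[a, p, b, q, a]"
  have w: "is_walk V E ?xs" using assms(1-4) adjV[of q a]
    by (simp add: is_walk_Cons2 is_walk_single adjV)
  have "nbw ?xs" using assms(5,6) by (simp add: nbw_Cons3 nbw_short)
  then have d: "distinct ?xs" by (rule nb_distinct[OF wf br w])
  then show False by simp
qed

definition nonleaf :: "'a \<Rightarrow> bool" where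
  "nonleaf u \<longleftrightarrow> u \<in> V \<and> u \<notin> K \<and> (\<exists>a b. a \<noteq> b \<and> adj E a u \<and> adj E b u)"

lemma nbK: "c \<in> K \<Longrightarrow> card {u \<in> V. adj E u c} = 3" using degK unfolding degree_def by blast

lemma third:
  assumes c: "c \<in> K" shows "\<exists>z. adj E z c \<and> z \<noteq> p \<and> z \<noteq> q"
proof (rule ccontr)
  assume "\<not> ?thesis"
  then have "{u \<in> V. adj E u c} \<subseteq> {p, q}" by auto
  then have "card {u \<in> V. adj E u c} \<le> card {p, q}" by (intro card_mono) auto
  also have "\<dots> \<le> 2" by (simp add: card_insert_le_m1)
  finally show False using nbK[OF c] by simp
qed

lemma has_nb: assumes u: "u \<in> V" shows "\<exists>a. adj E a u"
proof (cases "u \<in> K")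
  case True then show ?thesis using third[of u u u] by blast
next
  case False
  obtain k where k: "k \<in> K" using Kne by blast
  then have "k \<in> V" "k \<noteq> u" using KV False by auto
  then obtain xs where xs: "is_walk V E xs" "hd xs = u" "last xs = k" using conn_walk u by blast
  have "length xs \<noteq> 1"
  proof
    assume "length xs = 1"
    then have "hd xs = last xs" by (cases xs) auto
    then show False using xs \<open>k \<noteq> u\<close> by simp
  qed
  moreover have "xs \<noteq> []" using xs unfolding is_walk_def by simp
  ultimately have "Suc 0 < length xs" by (cases xs) auto
  then have "adj E (xs ! 0) (xs ! 1)" using walk_adj[OF xs(1), of 0] by simp
  moreover have "xs ! 0 = u" using xs \<open>xs \<noteq> []\<close> by (simp add: hd_conv_nth)
  ultimately show ?thesis using adj_sym by metis
qed

lemma leaf_unique: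
  assumes "u \<in> V" "u \<notin> K" "\<not> nonleaf u"
  shows "\<exists>c. adj E c u \<and> (\<forall>a. adj E a u \<longrightarrow> a = c)"
  using has_nb[OF assms(1)] assms unfolding nonleaf_def by blast


lemma CL:
  assumes c0: "c0 \<in> K" and u: "nonleaf u" and na: "\<not> adj E u c0"
  shows "\<exists>w1 w2 w3 c2. adj E c0 w1 \<and> adj E w1 w2 \<and> adj E w2 w3 \<and> adj E w3 c2 \<and>
     c0 \<noteq> w2 \<and> w1 \<noteq> w3 \<and> w2 \<noteq> c2 \<and> nonleaf w1 \<and> nonleaf w3 \<and> w2 \<in> K"
proof -
  have uV: "u \<in> V" "u \<notin> K" using u unfolding nonleaf_def by auto
  have c0V: "c0 \<in> V" using c0 KV by auto
  obtain xs where xs: "is_walk V E xs" "hd xs = c0" "last xs = u" "nbw xs"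
    using short_walk[OF conn_walk[OF c0V uV(1)]] by blast
  have ne: "xs \<noteq> []" using xs unfolding is_walk_def by simp
  have x0: "xs ! 0 = c0" using xs ne by (simp add: hd_conv_nth)
  have xl: "xs ! (length xs - 1) = u" using xs ne by (simp add: last_conv_nth)
  have n1: "length xs \<noteq> 1" using x0 xl c0 uV by auto
  have n2: "length xs \<noteq> 2"
  proof
    assume "length xs = 2"
    then have "adj E c0 u" using walk_adj[OF xs(1), of 0] x0 xl by simp
    then show False using na adj_sym by metis
  qed
  have a01: "length xs > 1 \<Longrightarrow> adj E c0 (xs ! 1)" using walk_adj[OF xs(1), of 0] x0 by simp
  have n3: "length xs \<noteq> 3"
  proof
    assume l: "length xs = 3"
    have "adj E c0 (xs ! 1)" using a01 l by simp
    then have "xs ! 1 \<notin> K" using bip c0 by blast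
    moreover have "adj E (xs ! 1) (xs ! 2)" using walk_adj[OF xs(1), of 1] l by (simp add: numeral_2_eq_2)
    ultimately have "xs ! 2 \<in> K" using bip by blast
    then show False using xl l uV by simp
  qed
  have n0: "length xs \<noteq> 0" using ne by simp
  have n4: "length xs \<ge> 4" using n0 n1 n2 n3 by presburger
  define w1 where "w1 = xs ! 1"
  define w2 where "w2 = xs ! 2"
  define w3 where "w3 = xs ! 3"
  have a1: "adj E c0 w1" using a01 n4 unfolding w1_def by simp
  have a2: "adj E w1 w2" using walk_adj[OF xs(1), of 1] n4 unfolding w1_def w2_def by (simp add: numeral_2_eq_2)
  have a3: "adj E w2 w3" using walk_adj[OF xs(1), of 2] n4 unfolding w2_def w3_def by (simp add: numeral_3_eq_3)
  have nbi: "\<And>i. i + 2 < length xs \<Longrightarrow> xs ! i \<noteq> xs ! (i + 2)" using xs(4) unfolding nbw_def by blast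
  have d1: "c0 \<noteq> w2" using nbi[of 0] n4 x0 unfolding w2_def by (simp add: numeral_2_eq_2)
  have d2: "w1 \<noteq> w3" using nbi[of 1] n4 unfolding w1_def w3_def by (simp add: numeral_2_eq_2 numeral_3_eq_3)
  obtain c2 where c2: "adj E w3 c2" "w2 \<noteq> c2"
  proof (cases "length xs = 4")
    case True
    then have "w3 = u" using xl unfolding w3_def by simp
    then obtain a b where "a \<noteq> b" "adj E a w3" "adj E b w3" using u unfolding nonleaf_def by blast
    then show ?thesis using that adj_sym by metis
  next
    case False
    then have l5: "length xs \<ge> 5" using n4 by simp
    have "adj E w3 (xs ! 4)" using walk_adj[OF xs(1), of 3] l5 unfolding w3_def by (simp add: eval_nat_numeral)
    moreover have "w2 \<noteq> xs ! 4" using nbi[of 2] l5 unfolding w2_def by (simp add: eval_nat_numeral)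
    ultimately show ?thesis using that by blast
  qed
  have w1K: "w1 \<notin> K" using bip a1 c0 by blast
  have w2K: "w2 \<in> K" using bip a2 w1K by blast
  have w3K: "w3 \<notin> K" using bip a3 w2K by blast
  have nl1: "nonleaf w1" unfolding nonleaf_def using w1K adjV[OF a1] adjV[OF a2] a1 a2 d1 adj_sym by metis
  have nl3: "nonleaf w3" unfolding nonleaf_def using w3K adjV[OF a3] a3 c2 adj_sym by metis
  show ?thesis using a1 a2 a3 c2 d1 d2 nl1 nl3 w2K by blast
qed

lemma struct_c0: "\<exists>c0\<in>K. \<forall>u. nonleaf u \<longrightarrow> adj E u c0"
proof (cases "\<exists>c0\<in>K. \<exists>u1 u2. u1 \<noteq> u2 \<and> nonleaf u1 \<and> nonleaf u2 \<and> adj E u1 c0 \<and> adj E u2 c0")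
  case True
  then show ?thesis
  proof (elim bexE exE conjE)
  fix c0 u1 u2 assume c0: "c0 \<in> K" "u1 \<noteq> u2" "nonleaf u1" "nonleaf u2" "adj E u1 c0" "adj E u2 c0"
  show ?thesis
  proof (intro bexI[OF _ c0(1)] allI impI, rule ccontr)
    fix u assume u: "nonleaf u" "\<not> adj E u c0"
    obtain w1 w2 w3 c2 where w: "adj E c0 w1" "adj E w1 w2" "adj E w2 w3" "adj E w3 c2"
      "c0 \<noteq> w2" "w1 \<noteq> w3" "w2 \<noteq> c2" "nonleaf w1" "nonleaf w3" "w2 \<in> K"
      using CL[OF c0(1) u] by blast
    obtain uj where uj: "nonleaf uj" "adj E uj c0" "uj \<noteq> w1"
    proof (cases "u1 = w1")
      case True then show ?thesis using that[of u2] c0 by auto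
    next
      case False then show ?thesis using that[of u1] c0 by auto
    qed
    obtain a b where ab: "a \<noteq> b" "adj E a uj" "adj E b uj" using uj unfolding nonleaf_def by blast
    obtain c' where c': "adj E c' uj" "c' \<noteq> c0"
    proof (cases "a = c0")
      case True then show ?thesis using that[of b] ab by auto
    next
      case False then show ?thesis using that[of a] ab by auto
    qed
    have c'K: "c' \<in> K" using bip c' uj unfolding nonleaf_def by blast
    obtain z where z: "adj E z c'" "z \<noteq> uj" using third[OF c'K, of uj uj] by blast
    have "adj E c' uj" using c'(1) .
    show False by (rule no8[OF z(1) c'(1) uj(2) w(1) w(2) w(3) w(4) z(2) c'(2) uj(3) w(5) w(6) w(7)])
  qed
  qed
next
  case False
  obtain c0 where c0: "c0 \<in> K" using Kne by blast
  show ?thesis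
  proof (intro bexI[OF _ c0] allI impI, rule ccontr)
    fix u assume u: "nonleaf u" "\<not> adj E u c0"
    obtain w1 w2 w3 c2 where w: "adj E c0 w1" "adj E w1 w2" "adj E w2 w3" "adj E w3 c2"
      "c0 \<noteq> w2" "w1 \<noteq> w3" "w2 \<noteq> c2" "nonleaf w1" "nonleaf w3" "w2 \<in> K"
      using CL[OF c0 u] by blast
    have "adj E w3 w2" using w(3) adj_sym by metis
    have "\<exists>c0\<in>K. \<exists>u1 u2. u1 \<noteq> u2 \<and> nonleaf u1 \<and> nonleaf u2 \<and> adj E u1 c0 \<and> adj E u2 c0"
      by (intro bexI[of _ w2] exI[of _ w1] exI[of _ w3] conjI) (use w \<open>adj E w3 w2\<close> in auto)
    then show False using False by blast
  qed
qed

lemma cnbhd: "closed_nbhd V E w = insert w {u \<in> V. adj E u w}" unfolding closed_nbhd_def ..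

lemma nb3_eq:
  assumes c: "c \<in> K" and "adj E u c" "adj E w c" "adj E y c" "u \<noteq> w" "u \<noteq> y" "w \<noteq> y"
  shows "{a \<in> V. adj E a c} = {u, w, y}"
proof -
  have sub: "{u, w, y} \<subseteq> {a \<in> V. adj E a c}" using assms adjV by auto
  have "card {u, w, y} = 3" using assms by simp
  moreover have "finite {a \<in> V. adj E a c}" using finV by simp
  ultimately show ?thesis using sub nbK[OF c] by (metis card_subset_eq)
qed

lemma upper: "is_identifying_code V E (V - K)"
  unfolding is_identifying_code_def
proof (intro conjI ballI impI)
  show "V - K \<subseteq> V" by blast
next
  fix v assume v: "v \<in> V"
  show "closed_nbhd V E v \<inter> (V - K) \<noteq> {}"
  proof (cases "v \<in> K")
    case True
    obtain z where z: "adj E z v" using third[OF True] by blast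
    then have "z \<in> V" "z \<notin> K" using adjV bip True by blast+
    then show ?thesis using z unfolding cnbhd by blast
  next
    case False then show ?thesis using v unfolding cnbhd by blast
  qed
next
  have eqL: "closed_nbhd V E u \<inter> (V - K) = {u}" if "u \<in> V" "u \<notin> K" for u
    using that bip unfolding cnbhd by blast
  have eqK: "closed_nbhd V E u \<inter> (V - K) = {a \<in> V. adj E a u}" if "u \<in> K" for u
    using that bip unfolding cnbhd by blast
  fix u w assume u: "u \<in> V" and w: "w \<in> V" and uw: "u \<noteq> w"
  show "closed_nbhd V E u \<inter> (V - K) \<noteq> closed_nbhd V E w \<inter> (V - K)"
  proof
    assume eq: "closed_nbhd V E u \<inter> (V - K) = closed_nbhd V E w \<inter> (V - K)"
    consider "u \<notin> K" "w \<notin> K" | "u \<notin> K" "w \<in> K" | "u \<in> K" "w \<notin> K" | "u \<in> K" "w \<in> K" by blast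
    then show False
    proof cases
      case 1 then show False using eq eqL u w uw by simp
    next
      case 2 then have "{a \<in> V. adj E a w} = {u}" using eq eqL eqK u by simp
      then show False using nbK[OF 2(2)] by simp
    next
      case 3 then have "{a \<in> V. adj E a u} = {w}" using eq eqL eqK w by simp
      then show False using nbK[OF 3(1)] by simp
    next
      case 4
      then have nbeq: "{a \<in> V. adj E a u} = {a \<in> V. adj E a w}" using eq eqK by simp
      obtain p where p: "adj E p u" using third[OF 4(1)] by blast
      obtain q where q: "adj E q u" "q \<noteq> p" using third[OF 4(1), of p p] by blast
      have "p \<in> V" "q \<in> V" using p q adjV by blast+
      then have "adj E p w" "adj E q w" using nbeq p q by blast+
      then show False using no4[of u p w q] p q uw adj_sym by metis
    qed
  qed
qed

lemma lower:
  assumes C: "is_identifying_code V E C"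
  shows "card (V - K) \<le> card C"
proof -
  obtain c0 where c0: "c0 \<in> K" "\<And>u. nonleaf u \<Longrightarrow> adj E u c0" using struct_c0 by blast
  have CV: "C \<subseteq> V" and dom: "\<And>v. v \<in> V \<Longrightarrow> closed_nbhd V E v \<inter> C \<noteq> {}"
    and sep: "\<And>u w. u \<in> V \<Longrightarrow> w \<in> V \<Longrightarrow> u \<noteq> w \<Longrightarrow> closed_nbhd V E u \<inter> C \<noteq> closed_nbhd V E w \<inter> C"
  proof -
    have h: "C \<subseteq> V \<and> (\<forall>v\<in>V. closed_nbhd V E v \<inter> C \<noteq> {}) \<and>
     (\<forall>u\<in>V. \<forall>v\<in>V. u \<noteq> v \<longrightarrow> closed_nbhd V E u \<inter> C \<noteq> closed_nbhd V E v \<inter> C)"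
      using C unfolding is_identifying_code_def .
    show "C \<subseteq> V" using h by (rule conjunct1)
    show "\<And>v. v \<in> V \<Longrightarrow> closed_nbhd V E v \<inter> C \<noteq> {}" using h by blast
    show "\<And>u w. u \<in> V \<Longrightarrow> w \<in> V \<Longrightarrow> u \<noteq> w \<Longrightarrow> closed_nbhd V E u \<inter> C \<noteq> closed_nbhd V E w \<inter> C"
      using h by blast
  qed
  have c0V: "c0 \<in> V" using c0 KV by auto
  have no2: "p = q" if "c \<in> K" "c \<noteq> c0" "adj E c p" "adj E c q" "adj E p c0" "adj E q c0" for c p q
  proof (rule ccontr)
    assume "p \<noteq> q"
    moreover have "adj E c0 p" "adj E p c" using that(3,5) by (simp_all add: adj_sym)
    moreover have "c0 \<noteq> c" using that(2) by simp
    ultimately show False using no4[of c0 p c q] that(4,6) by blast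
  qed
  define cen where "cen u = (THE c. adj E c u)" for u
  have leaf0: "adj E (cen u) u \<and> (\<forall>a. adj E a u \<longrightarrow> a = cen u) \<and> cen u \<in> K \<and> cen u \<noteq> c0"
    if hu: "u \<in> V" "u \<notin> K" "\<not> adj E u c0" for u
  proof -
    have "\<not> nonleaf u" using c0(2) hu by blast
    then obtain c where c: "adj E c u" "\<forall>a. adj E a u \<longrightarrow> a = c" using leaf_unique hu by blast
    then have "cen u = c" unfolding cen_def by (intro the_equality) blast+
    moreover have "c \<in> K" using bip c hu by blast
    moreover have "c \<noteq> c0" using c hu adj_sym by metis
    ultimately show ?thesis using c by blast
  qed
  have leaf: "adj E (cen u) u \<and> cen u \<in> K \<and> cen u \<noteq> c0"
    if "u \<in> V" "u \<notin> K" "\<not> adj E u c0" for u using leaf0[OF that] by blast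
  have leafU: "\<And>a. adj E a u \<Longrightarrow> a = cen u"
    if "u \<in> V" "u \<notin> K" "\<not> adj E u c0" for u using leaf0[OF that] by blast
  define P where "P u c \<longleftrightarrow> c \<in> C \<and> c \<in> K \<and> c \<noteq> c0 \<and> adj E c u" for u c
  define psi where "psi u = (if adj E u c0 then (if \<exists>c. P u c then (SOME c. P u c) else c0) else cen u)" for u
  have nbC: "closed_nbhd V E u \<inter> C = {a \<in> V. adj E a u} \<inter> C" if "u \<notin> C" for u
    using that unfolding cnbhd by blast
  have caseA: "psi u = cen u \<and> cen u \<in> C \<and> closed_nbhd V E u \<inter> C = {cen u}"
    if "u \<in> V" "u \<notin> K" "u \<notin> C" "\<not> adj E u c0" for u
  proof -
    note l = leaf[OF that(1,2,4)]
    have nb: "{a \<in> V. adj E a u} = {cen u}" using l leafU[OF that(1,2,4)] adjV by blast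
    have "closed_nbhd V E u \<inter> C = {cen u} \<inter> C" using nbC[OF that(3)] nb by simp
    moreover have "closed_nbhd V E u \<inter> C \<noteq> {}" using dom that(1) by blast
    ultimately have "cen u \<in> C" by auto
    then show ?thesis using \<open>closed_nbhd V E u \<inter> C = {cen u} \<inter> C\<close> that(4) unfolding psi_def by auto
  qed
  have caseB: "P u (psi u)" if "adj E u c0" "\<exists>c. P u c" for u
    using that someI_ex[OF that(2)] unfolding psi_def by simp
  have caseC: "psi u = c0 \<and> c0 \<in> C \<and> closed_nbhd V E u \<inter> C = {c0}"
    if "u \<in> V" "u \<notin> K" "u \<notin> C" "adj E u c0" "\<not> (\<exists>c. P u c)" for u
  proof -
    have sub: "closed_nbhd V E u \<inter> C \<subseteq> {c0}"
    proof
      fix z assume z: "z \<in> closed_nbhd V E u \<inter> C"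
      then have zz: "z \<in> C" "adj E z u" using nbC[OF that(3)] by auto
      then have "z \<in> K" using bip that(2) by blast
      then show "z \<in> {c0}" using zz that(5) unfolding P_def by auto
    qed
    moreover have "closed_nbhd V E u \<inter> C \<noteq> {}" using dom that(1) by blast
    ultimately have "closed_nbhd V E u \<inter> C = {c0}" by blast
    then show ?thesis using that(4,5) unfolding psi_def by auto
  qed
  let ?L = "V - K"
  have maps: "psi ` (?L - C) \<subseteq> C \<inter> K"
  proof
    fix c assume "c \<in> psi ` (?L - C)"
    then obtain u where u: "u \<in> V" "u \<notin> K" "u \<notin> C" "c = psi u" by blast
    show "c \<in> C \<inter> K"
    proof (cases "adj E u c0")
      case False then show ?thesis using caseA[OF u(1-3) False] leaf[OF u(1,2) False] u(4) by simp
    next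
      case True
      show ?thesis
      proof (cases "\<exists>c. P u c")
        case True2: True
        then show ?thesis using caseB[OF True True2] u(4) unfolding P_def by simp
      next
        case False
        then show ?thesis using caseC[OF u(1-3) True False] u(4) c0(1) by simp
      qed
    qed
  qed
  have inj: "inj_on psi (?L - C)"
  proof
    fix u w assume u: "u \<in> ?L - C" and w: "w \<in> ?L - C" and e: "psi u = psi w"
    have uu: "u \<in> V" "u \<notin> K" "u \<notin> C" and ww: "w \<in> V" "w \<notin> K" "w \<notin> C" using u w by auto
    show "u = w"
    proof (rule ccontr)
      assume uw: "u \<noteq> w"
      have mixed: False if a: "u' \<in> V" "u' \<notin> K" "u' \<notin> C" "\<not> adj E u' c0"
        and b: "w' \<in> V" "w' \<notin> K" "w' \<notin> C" "adj E w' c0" and e': "psi u' = psi w'" for u' w'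
      proof -
        note A = caseA[OF a] and l = leaf[OF a(1,2,4)]
        define c where "c = cen u'"
        have cK: "c \<in> K" "c \<noteq> c0" "c \<in> C" "adj E c u'" using A l unfolding c_def by auto
        have "\<exists>c. P w' c"
        proof (rule ccontr)
          assume "\<not> (\<exists>c. P w' c)"
          then have "psi w' = c0" using caseC[OF b] by simp
          then show False using e' A cK unfolding c_def by simp
        qed
        then have Pw: "P w' c" using caseB[OF b(4)] e' A unfolding c_def by simp
        then have cw: "adj E c w'" unfolding P_def by simp
        have uw': "u' \<noteq> w'" using a(4) b(4) by auto
        obtain y where y: "adj E y c" "y \<noteq> u'" "y \<noteq> w'" using third[OF cK(1)] by blast
        have nb: "{a \<in> V. adj E a c} = {u', w', y}"
          using nb3_eq[OF cK(1)] cK(4) cw y uw' adj_sym by metis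
        have cnc: "closed_nbhd V E c \<inter> C = insert c ({y} \<inter> C)"
          using nb cK(3) a(3) b(3) unfolding cnbhd by auto
        have "c \<noteq> u'" using cK(1) a(2) by auto
        then have "closed_nbhd V E u' \<inter> C \<noteq> closed_nbhd V E c \<inter> C"
          using sep a(1) cK(1) KV by (metis subsetD)
        then have yC: "y \<in> C" using cnc A unfolding c_def by auto
        have yV: "y \<in> V" "y \<notin> K" using y adjV bip cK(1) by blast+
        have "\<not> nonleaf y"
        proof
          assume "nonleaf y"
          then have "adj E y c0" using c0(2) by blast
          then have "w' = y" using no2[OF cK(1) cK(2) cw] y(1) b(4) adj_sym by metis
          then show False using y by simp
        qed
        then obtain c' where c': "adj E c' y" "\<forall>a. adj E a y \<longrightarrow> a = c'" using leaf_unique yV by blast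
        then have "c' = c" using y(1) adj_sym by metis
        then have "{a \<in> V. adj E a y} = {c}" using c' adjV y(1) by blast
        then have "closed_nbhd V E y \<inter> C = {y, c}" using yC cK(3) unfolding cnbhd by auto
        moreover have "closed_nbhd V E c \<inter> C = {c, y}" using cnc yC by auto
        moreover have "y \<noteq> c" using yV cK(1) by auto
        ultimately show False using sep yV(1) cK(1) KV by (metis insert_commute subsetD)
      qed
      consider "\<not> adj E u c0" "\<not> adj E w c0" | "\<not> adj E u c0" "adj E w c0" | "adj E u c0" "\<not> adj E w c0"
        | "adj E u c0" "adj E w c0" by blast
      then show False
      proof cases
        case 1
        have "closed_nbhd V E u \<inter> C = closed_nbhd V E w \<inter> C"
          using caseA[OF uu 1(1)] caseA[OF ww 1(2)] e by simp
        then show False using sep uu ww uw by blast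
      next
        case 2 then show False using mixed[OF uu 2(1) ww 2(2) e] by simp
      next
        case 3 then show False using mixed[OF ww 3(2) uu 3(1) e[symmetric]] by simp
      next
        case 4
        show False
        proof (cases "\<exists>c. P u c")
          case Pu: True
          show False
          proof (cases "\<exists>c. P w c")
            case Pw: True
            have "P u (psi u)" "P w (psi u)" using caseB[OF 4(1) Pu] caseB[OF 4(2) Pw] e by auto
            then show False using no2[of "psi u" u w] 4 uw unfolding P_def by blast
          next
            case Pw: False
            have "P u (psi u)" using caseB[OF 4(1) Pu] by simp
            moreover have "psi w = c0" using caseC[OF ww 4(2) Pw] by simp
            ultimately show False using e unfolding P_def by simp
          qed
        next
          case Pu: False
          show False
          proof (cases "\<exists>c. P w c")
            case Pw: True
            have "P w (psi w)" using caseB[OF 4(2) Pw] by simp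
            moreover have "psi u = c0" using caseC[OF uu 4(1) Pu] by simp
            ultimately show False using e unfolding P_def by simp
          next
            case Pw: False
            have "closed_nbhd V E u \<inter> C = closed_nbhd V E w \<inter> C"
              using caseC[OF uu 4(1) Pu] caseC[OF ww 4(2) Pw] by simp
            then show False using sep uu ww uw by blast
          qed
        qed
      qed
    qed
  qed
  have finC: "finite C" using CV finV finite_subset by blast
  have "card (?L - C) \<le> card (C \<inter> K)"
    using card_inj_on_le[OF inj maps] finC by simp
  moreover have "card ?L = card (?L \<inter> C) + card (?L - C)"
  proof -
    have "?L = (?L \<inter> C) \<union> (?L - C)" by blast
    moreover have "finite ?L" using finV by simp
    ultimately show ?thesis by (metis card_Un_disjoint Diff_disjoint finite_Diff finite_Int Int_Diff_disjoint)
  qed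
  moreover have "card C = card (C \<inter> K) + card (?L \<inter> C)"
  proof -
    have "C = (C \<inter> K) \<union> (?L \<inter> C)" using CV by blast
    moreover have "(C \<inter> K) \<inter> (?L \<inter> C) = {}" by blast
    ultimately show ?thesis using finC by (metis card_Un_disjoint finite_Int)
  qed
  ultimately show ?thesis by simp
qed

lemma gamma: "gamma_ID V E = card (V - K)"
proof -
  have le: "gamma_ID V E \<le> card (V - K)" unfolding gamma_ID_def
    by (rule Least_le) (rule exI[of _ "V - K"], simp add: upper)
  have "\<exists>k C. is_identifying_code V E C \<and> card C = k" using upper by blast
  then have "\<exists>C. is_identifying_code V E C \<and> card C = gamma_ID V E"
    unfolding gamma_ID_def by (rule LeastI_ex)
  then obtain C where "is_identifying_code V E C" "card C = gamma_ID V E" by blast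
  then have "card (V - K) \<le> gamma_ID V E" using lower by metis
  then show ?thesis using le by simp
qed

lemma final: "real (gamma_ID V E) = 2 / 3 * real (card V) + 1 / 3"
proof -
  have "finite K" using finite_subset[OF KV finV] .
  then have "card (V - K) = card V - card K" using KV by (simp add: card_Diff_subset)
  then have "gamma_ID V E = 2 * card K + 1" using gamma cardV by simp
  then show ?thesis using cardV by (simp add: field_simps)
qed
end


theorem mainTheorem13:
  fixes V :: "'a set" and E :: "'a set set"
  assumes "appended_3star V E"
    and "max_degree V E = 3"
    and "diameter V E \<le> 6"
  shows "real (gamma_ID V E) = 2 / 3 * real (card V) + 1 / 3"
proof -
  have fw: "finite V" "wf_edges V E" using basic_induct[OF assms(1)] by auto
  have deg: "\<forall>w\<in>V. degree V E w \<le> 3"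
  proof
    fix w assume w: "w \<in> V"
    have "degree V E w \<le> Max (degree V E ` V)" using fw(1) w by (intro Max_ge) auto
    then show "degree V E w \<le> 3" using assms(2) unfolding max_degree_def by simp
  qed
  obtain K where K: "Inv V E K" using inv_induct[OF assms(1) deg] by blast
  have dm: "\<forall>u\<in>V. \<forall>w\<in>V. dist V E u w \<le> 6"
  proof (intro ballI)
    fix u w assume u: "u \<in> V" and w: "w \<in> V"
    have eq: "{dist V E u v | u v. u \<in> V \<and> v \<in> V} = (\<lambda>(u, v). dist V E u v) ` (V \<times> V)" by auto
    have "finite {dist V E u v | u v. u \<in> V \<and> v \<in> V}" unfolding eq using fw(1) by simp
    then have "dist V E u w \<le> diameter V E" unfolding diameter_def using u w by (intro Max_ge) auto
    then show "dist V E u w \<le> 6" using assms(3) by simp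
  qed
  interpret fin_graph V E K using K deg dm by unfold_locales
  show ?thesis by (rule final)
qed

end
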